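(* Let $q=2^m$ and let $f\in\mathbb{F}_q[x]$ define a function $f:\mathbb{F}_q\to\mathbb{F}_q$. Let $X$ be the algebraic set of points $(x,y,z,t)$ in the affine space $\mathbb{A}^4(\overline{\mathbb{F}}_q)$ such that $P_f(x,y,z)=P_f(x,y,t)=0$, and let $V\subset\mathbb{A}^4(\overline{\mathbb{F}}_q)$ be the hypersurface defined by $$(x+y)(x+z)(x+t)(y+z)(y+t)(z+t)(x+y+z+t)=0.$$ Then $\delta(f)\le 4$ if and only if $X(\mathbb{F}_q)\subset V$, where $X(\mathbb{F}_q)$ denotes the set of $\mathbb{F}_q$-rational points of $X$.
   Context: The differential uniformity of $f:\mathbb{F}_q\to\mathbb{F}_q$ is $\delta(f)=\max_{\alpha\neq0,\beta\in\mathbb{F}_q}\#\{x\in\mathbb{F}_q : f(x+\alpha)+f(x)=\beta\}$. For a polynomial $f$, the polynomial $f(x)+f(y)+f(z)+f(x+y+z)$ is divisible by $(x+y)(x+z)(y+z)$, and $P_f(x,y,z)$ denotes the quotient polynomial $\frac{f(x)+f(y)+f(z)+f(x+y+z)}{(x+y)(x+z)(y+z)}$. *)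

theory Defs
  imports "HOL-Computational_Algebra.Polynomial"
begin

text \<open>Trivariate polynomials over a field are represented as nested univariate
polynomials: an element of 'a poly poly poly is a polynomial in Z whose
coefficients are polynomials in Y whose coefficients are polynomials in X.\<close>

definition const3 :: "'a::comm_ring_1 \<Rightarrow> 'a poly poly poly" where
  "const3 c = [:[:[:c:]:]:]"

definition varX :: "'a::comm_ring_1 poly poly poly" where
  "varX = [:[:[:0, 1:]:]:]"

definition varY :: "'a::comm_ring_1 poly poly poly" where
  "varY = [:[:[:0:], [:1:]:]:]"

definition varZ :: "'a::comm_ring_1 poly poly poly" where
  "varZ = [:0, 1:]"

definition eval3 :: "'a::comm_ring_1 poly poly poly \<Rightarrow> 'a \<Rightarrow> 'a \<Rightarrow> 'a \<Rightarrow> 'a" where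
  "eval3 P x y z = poly (poly (poly P [:[:z:]:]) [:y:]) x"

definition subst3 :: "'a::comm_ring_1 poly \<Rightarrow> 'a poly poly poly \<Rightarrow> 'a poly poly poly" where
  "subst3 f T = poly (map_poly const3 f) T"

definition Pf :: "'a::field poly \<Rightarrow> 'a poly poly poly" where
  "Pf f = (subst3 f varX + subst3 f varY + subst3 f varZ + subst3 f (varX + varY + varZ))
           div ((varX + varY) * (varX + varZ) * (varY + varZ))"

definition diff_uniformity :: "('a::{field,finite} \<Rightarrow> 'a) \<Rightarrow> nat" where
  "diff_uniformity F = Max {card {x. F (x + \<alpha>) + F x = \<beta>} | \<alpha> \<beta>. \<alpha> \<noteq> 0}"

end

theory Submission
  imports Defs "HOL-Number_Theory.Residues"
begin

lemma char2:
  assumes "card (UNIV :: 'a::{field,finite} set) = 2 ^ m"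
  shows "(2::'a) = 0"
proof -
  have p: "prime CHAR('a)" by (rule prime_CHAR_semidom) (simp add: finite_imp_CHAR_pos)
  have "CHAR('a) dvd 2 ^ m" using CHAR_dvd_CARD[where 'a='a] assms by simp
  hence "CHAR('a) dvd 2" using p prime_dvd_power by blast
  moreover have "CHAR('a) \<noteq> 1" using p by auto
  ultimately have "CHAR('a) = 2" using two_is_prime_nat unfolding prime_nat_iff by blast
  thus ?thesis by (metis of_nat_CHAR of_nat_numeral)
qed

fun qq :: "'b::comm_ring_1 \<Rightarrow> 'b \<Rightarrow> 'b \<Rightarrow> nat \<Rightarrow> 'b" where
  "qq x y z 0 = 0"
| "qq x y z (Suc 0) = 0"
| "qq x y z (Suc (Suc 0)) = 0"
| "qq x y z (Suc (Suc (Suc 0))) = 1"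
| "qq x y z (Suc (Suc (Suc (Suc k)))) =
     (let w = x + y + z in
     (x*y+x*z+x*w+y*z+y*w+z*w) * qq x y z (Suc (Suc k)) + (x*y*z+x*y*w+x*z*w+y*z*w) * qq x y z (Suc k)
     + (x*y*z*w) * qq x y z k)"

lemma four_step:
  fixes x y z v :: "'b::comm_ring_1"
  assumes two: "(1+1::'b) = 0" and v: "v = x \<or> v = y \<or> v = z \<or> v = x + y + z"
  shows "v ^ (k+4) = (let w = x + y + z in
     (x*y+x*z+x*w+y*z+y*w+z*w) * v^(k+2) + (x*y*z+x*y*w+x*z*w+y*z*w) * v^(k+1)
     + (x*y*z*w) * v^k)"
proof -
  define w where "w = x + y + z"
  have e1: "x + y + z + w = (1+1) * w" unfolding w_def by (simp add: distrib_right)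
  have id: "v^4 = (v+x)*(v+y)*(v+z)*(v+w) - (x + y + z + w) * v^3 - (x*y+x*z+x*w+y*z+y*w+z*w) * v^2 - (x*y*z+x*y*w+x*z*w+y*z*w) * v
     - (x*y*z*w)" by (simp add: algebra_simps power_numeral_reduce power2_eq_square)
  have neg: "\<And>a::'b. - a = a" proof -
    fix a :: 'b have "a + a = (1+1)*a" by (simp add: distrib_right)
    thus "-a = a" using two by (metis add_eq_0_iff2 mult_zero_left) qed
  have vv: "v + v = (1+1) * v" by (simp add: distrib_right)
  have "(v+x)*(v+y)*(v+z)*(v+w) = 0"
    using v vv two unfolding w_def[symmetric] by auto
  with id e1 two neg have "v^4 = (x*y+x*z+x*w+y*z+y*w+z*w) * v^2 + (x*y*z+x*y*w+x*z*w+y*z*w) * v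
     + (x*y*z*w)" by simp
  hence "v^(k+4) = ((x*y+x*z+x*w+y*z+y*w+z*w) * v^2 + (x*y*z+x*y*w+x*z*w+y*z*w) * v
     + (x*y*z*w)) * v^k" by (simp add: power_add)
  also have "\<dots> = (x*y+x*z+x*w+y*z+y*w+z*w) * v^(k+2) + (x*y*z+x*y*w+x*z*w+y*z*w) * v^(k+1)
     + (x*y*z*w) * v^k" by (simp add: power_add algebra_simps power2_eq_square)
  finally show ?thesis unfolding w_def[symmetric] Let_def .
qed

lemma c2_elim: fixes a b c :: "'b::comm_ring_1" assumes "(1+1::'b) = 0" "a = b + (1+1)*c" shows "a = b"
  using assms by simp

lemma psum_qq:
  fixes x y z :: "'b::comm_ring_1"
  assumes two: "(1+1::'b) = 0"
  shows "x^k + y^k + z^k + (x+y+z)^k = (x+y)*(x+z)*(y+z) * qq x y z k"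
proof (induction x y z k rule: qq.induct)
  case (1 x y z)
  have "(1::'b) + 1 + 1 + 1 = 0 + (1+1) * (1+1)" by (simp add: distrib_right)
  hence "(1::'b) + 1 + 1 + 1 = 0" by (rule c2_elim[OF two])
  then show ?case by simp
next
  case (2 x y z)
  have "x + y + z + (x + y + z) = 0 + (1+1) * (x+y+z)" by (simp add: distrib_right)
  hence "x + y + z + (x + y + z) = 0" by (rule c2_elim[OF two])
  then show ?case by simp
next
  case (3 x y z)
  have "x^2 + y^2 + z^2 + (x + y + z)^2 = 0 + (1+1) * (x^2+y^2+z^2+x*y+x*z+y*z)" by (simp add: algebra_simps power2_eq_square)
  hence "x^2 + y^2 + z^2 + (x + y + z)^2 = 0" by (rule c2_elim[OF two])
  then show ?case by (simp only: qq.simps mult_zero_right numeral_2_eq_2)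
next
  case (4 x y z)
  have "x^3 + y^3 + z^3 + (x + y + z)^3 = (x+y)*(x+z)*(y+z) + (1+1) * (x^3+y^3+z^3+x^2*y+x^2*z+y^2*x+y^2*z+z^2*x+z^2*y + (1+1)*x*y*z)" by (simp add: algebra_simps power_numeral_reduce power2_eq_square)
  hence "x^3 + y^3 + z^3 + (x + y + z)^3 = (x+y)*(x+z)*(y+z)" by (rule c2_elim[OF two])
  then show ?case by (simp only: qq.simps mult_1_right numeral_3_eq_3)
next
  case (5 x y z k)
  define w where "w = x + y + z"
  define a where "a = x*y+x*z+x*w+y*z+y*w+z*w"
  define b where "b = x*y*z+x*y*w+x*z*w+y*z*w"
  define c where "c = x*y*z*w"
  have st: "\<And>v. v = x \<or> v = y \<or> v = z \<or> v = w \<Longrightarrow> v^(k+4) = a * v^(k+2) + b*v^(k+1) + c*v^k"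
    using four_step[OF two] unfolding a_def b_def c_def w_def Let_def by blast
  define D where "D = (x+y)*(x+z)*(y+z)"
  define p where "p = (\<lambda>j. x^j + y^j + z^j + w^j)"
  have "p (k+4) = a * p (k+2) + b * p (k+1) + c * p k"
    unfolding p_def using st[of x] st[of y] st[of z] st[of w] by (simp add: distrib_left)
  also have "p (k+2) = D * qq x y z (Suc (Suc k))" using "5.IH"(1) unfolding p_def D_def w_def by simp
  also have "p (k+1) = D * qq x y z (Suc k)" using "5.IH"(2) unfolding p_def D_def w_def by simp
  also have "p k = D * qq x y z k" using "5.IH"(3) unfolding p_def D_def w_def by simp
  also have "a * (D * qq x y z (Suc (Suc k))) + b * (D * qq x y z (Suc k)) + c * (D * qq x y z k)
     = D * (a * qq x y z (Suc (Suc k)) + b * qq x y z (Suc k) + c * qq x y z k)"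
    by (simp add: algebra_simps)
  also have "a * qq x y z (Suc (Suc k)) + b * qq x y z (Suc k) + c * qq x y z k = qq x y z (Suc (Suc (Suc (Suc k))))"
    by (simp add: a_def b_def c_def w_def Let_def)
  finally have "p (k+4) = D * qq x y z (Suc (Suc (Suc (Suc k))))" .
  moreover have "k + 4 = Suc (Suc (Suc (Suc k)))" by simp
  ultimately show ?case unfolding p_def D_def w_def by metis
qed


lemma two_poly: "(1+1::'b::comm_ring_1) = 0 \<Longrightarrow> (1+1::'b poly) = 0"
  by (simp add: one_pCons)

lemma const3_0 [simp]: "const3 0 = 0" by (simp add: const3_def)
lemma const3_eq_0 [simp]: "const3 c = 0 \<longleftrightarrow> c = 0" by (simp add: const3_def)

lemma subst3_sum: "subst3 f T = (\<Sum>i\<le>degree f. const3 (Polynomial.coeff f i) * T ^ i)"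
proof -
  have "degree (map_poly const3 f) = degree f" by (rule degree_map_poly) simp
  thus ?thesis unfolding subst3_def by (simp add: poly_altdef coeff_map_poly)
qed

lemma eval3_add [simp]: "eval3 (P + Q) x y z = eval3 P x y z + eval3 Q x y z"
  by (simp add: eval3_def)
lemma eval3_mult [simp]: "eval3 (P * Q) x y z = eval3 P x y z * eval3 Q x y z"
  by (simp add: eval3_def)
lemma eval3_power [simp]: "eval3 (P ^ n) x y z = eval3 P x y z ^ n"
  by (simp add: eval3_def)
lemma eval3_sum [simp]: "eval3 (\<Sum>i\<in>A. P i) x y z = (\<Sum>i\<in>A. eval3 (P i) x y z)"
  by (simp add: eval3_def poly_sum)
lemma eval3_const3 [simp]: "eval3 (const3 c) x y z = c"
  by (simp add: eval3_def const3_def)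
lemma eval3_varX [simp]: "eval3 varX x y z = x"
  by (simp add: eval3_def varX_def)
lemma eval3_varY [simp]: "eval3 varY x y z = y"
  by (simp add: eval3_def varY_def)
lemma eval3_varZ [simp]: "eval3 varZ x y z = z"
  by (simp add: eval3_def varZ_def)

lemma eval3_subst3: "eval3 (subst3 f T) x y z = poly f (eval3 T x y z)"
  by (simp add: subst3_sum poly_altdef)

lemma D_nonzero: "((varX + varY) * (varX + varZ) * (varY + varZ) :: 'a::field poly poly poly) \<noteq> 0"
  by (simp add: varX_def varY_def varZ_def)

lemma Pf_eq:
  fixes f :: "'a::field poly"
  assumes two: "(1+1::'a) = 0"
  shows "subst3 f varX + subst3 f varY + subst3 f varZ + subst3 f (varX + varY + varZ)
     = (varX + varY) * (varX + varZ) * (varY + varZ) * Pf f"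
proof -
  define D :: "'a poly poly poly" where "D = (varX + varY) * (varX + varZ) * (varY + varZ)"
  have two3: "(1+1::'a poly poly poly) = 0" using two by (intro two_poly)
  have "subst3 f varX + subst3 f varY + subst3 f varZ + subst3 f (varX + varY + varZ)
     = (\<Sum>i\<le>degree f. const3 (Polynomial.coeff f i) * (varX^i + varY^i + varZ^i + (varX + varY + varZ)^i))"
    by (simp add: subst3_sum sum.distrib[symmetric] distrib_left)
  also have "\<dots> = D * (\<Sum>i\<le>degree f. const3 (Polynomial.coeff f i) * qq varX varY varZ i)"
    unfolding D_def psum_qq[OF two3] by (simp add: sum_distrib_left ac_simps)
  finally have N: "subst3 f varX + subst3 f varY + subst3 f varZ + subst3 f (varX + varY + varZ) = D * (\<Sum>i\<le>degree f. const3 (Polynomial.coeff f i) * qq varX varY varZ i)" .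
  have "Pf f = (\<Sum>i\<le>degree f. const3 (Polynomial.coeff f i) * qq varX varY varZ i)"
  proof -
    have "D \<noteq> 0" unfolding D_def by (rule D_nonzero)
    thus ?thesis unfolding Pf_def N D_def[symmetric] by (rule nonzero_mult_div_cancel_left)
  qed
  thus ?thesis using N D_def by simp
qed

lemma keyid:
  fixes f :: "'a::field poly"
  assumes two: "(1+1::'a) = 0"
  shows "poly f x + poly f y + poly f z + poly f (x+y+z) = (x+y)*(x+z)*(y+z) * eval3 (Pf f) x y z"
proof -
  have "eval3 (subst3 f varX + subst3 f varY + subst3 f varZ + subst3 f (varX + varY + varZ)) x y z
    = eval3 ((varX + varY) * (varX + varZ) * (varY + varZ) * Pf f) x y z"
    using Pf_eq[OF two] by simp
  thus ?thesis by (simp add: eval3_subst3)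
qed


lemma exists_outside:
  fixes A :: "'a::finite set"
  assumes "length xs < card A"
  shows "\<exists>a\<in>A. a \<notin> set xs"
proof (rule ccontr)
  assume "\<not> ?thesis"
  hence "A \<subseteq> set xs" by blast
  hence "card A \<le> card (set xs)" by (intro card_mono) simp_all
  also have "\<dots> \<le> length xs" by (rule card_length)
  finally show False using assms by simp
qed

theorem theorem2p2:
  fixes f :: "'a::{field,finite} poly" and m :: nat
  assumes "card (UNIV :: 'a set) = 2 ^ m"
  shows "diff_uniformity (poly f) \<le> 4 \<longleftrightarrow>
    (\<forall>x y z t :: 'a. eval3 (Pf f) x y z = 0 \<and> eval3 (Pf f) x y t = 0 \<longrightarrow>
       (x + y) * (x + z) * (x + t) * (y + z) * (y + t) * (z + t) * (x + y + z + t) = 0)"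
proof -
  have two: "(1+1::'a) = 0" using char2[OF assms] by (simp add: one_add_one)
  have aa [simp]: "a + a = 0" for a :: 'a
  proof -
    have "a + a = (1+1) * a" by (simp add: distrib_right)
    thus ?thesis using two by simp
  qed
  have aa2 [simp]: "a + (a + b) = b" for a b :: 'a
    by (simp add: add.assoc[symmetric])
  have neg: "- a = a" for a :: 'a using aa[of a] by (metis add_eq_0_iff2)
  have neqI: "a + b \<noteq> 0 \<Longrightarrow> a \<noteq> b" for a b :: 'a by auto
  have sumI: "a \<noteq> b \<Longrightarrow> a + b \<noteq> 0" for a b :: 'a
    by (metis add_eq_0_iff2 neg)
  have swap: "a + b + c + d = 0 \<Longrightarrow> d + c = b + a" for a b c d :: 'a
    by (metis add.assoc add.commute add_eq_0_iff2 neg)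
  define F where "F = poly f"
  define E where "E = eval3 (Pf f)"
  have key: "F x + F y + F z + F (x+y+z) = (x+y)*(x+z)*(y+z) * E x y z" for x y z
    unfolding F_def E_def by (rule keyid[OF two])
  define Sol where "Sol \<alpha> \<beta> = {x. F (x + \<alpha>) + F x = \<beta>}" for \<alpha> \<beta>
  have fin: "finite {card (Sol \<alpha> \<beta>) | \<alpha> \<beta>. \<alpha> \<noteq> 0}"
  proof (rule finite_subset)
    show "{card (Sol \<alpha> \<beta>) | \<alpha> \<beta>. \<alpha> \<noteq> 0} \<subseteq> (\<lambda>p. card (Sol (fst p) (snd p))) ` UNIV" 
  proof clarify
    fix a b :: 'a assume "a \<noteq> 0"
    show "card (Sol a b) \<in> range (\<lambda>p. card (Sol (fst p) (snd p)))" by (rule range_eqI[of _ _ "(a,b)"]) simp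
  qed
  qed simp
  have "card (Sol 1 0) \<in> {card (Sol \<alpha> \<beta>) | \<alpha> \<beta>. \<alpha> \<noteq> 0}" by auto
  hence ne: "{card (Sol \<alpha> \<beta>) | \<alpha> \<beta>. \<alpha> \<noteq> 0} \<noteq> {}" by blast
  have du: "diff_uniformity (poly f) \<le> 4 \<longleftrightarrow> (\<forall>\<alpha> \<beta>. \<alpha> \<noteq> 0 \<longrightarrow> card (Sol \<alpha> \<beta>) \<le> 4)"
    unfolding diff_uniformity_def F_def[symmetric] Sol_def[symmetric]
    using Max_le_iff[OF fin ne] by blast
  show ?thesis unfolding du E_def[symmetric]
  proof
    assume H: "\<forall>\<alpha> \<beta>. \<alpha> \<noteq> 0 \<longrightarrow> card (Sol \<alpha> \<beta>) \<le> 4"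
    show "\<forall>x y z t. E x y z = 0 \<and> E x y t = 0 \<longrightarrow>
       (x + y) * (x + z) * (x + t) * (y + z) * (y + t) * (z + t) * (x + y + z + t) = 0"
    proof (intro allI impI, rule ccontr)
      fix x y z t
      assume E0: "E x y z = 0 \<and> E x y t = 0"
      assume "(x + y) * (x + z) * (x + t) * (y + z) * (y + t) * (z + t) * (x + y + z + t) \<noteq> 0"
      hence nz: "x + y \<noteq> 0" "x + z \<noteq> 0" "x + t \<noteq> 0" "y + z \<noteq> 0" "y + t \<noteq> 0" "z + t \<noteq> 0"
        "x + y + z + t \<noteq> 0" by auto
      define \<alpha> where "\<alpha> = x + y"
      define \<beta> where "\<beta> = F y + F x"
      have kz: "F x + F y + F z + F (x+y+z) = 0" using key[of x y z] E0 by simp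
      have kt: "F x + F y + F t + F (x+y+t) = 0" using key[of x y t] E0 by simp
      have in1: "x \<in> Sol \<alpha> \<beta>" unfolding Sol_def \<alpha>_def \<beta>_def by (simp add: add.assoc[symmetric])
      have in2: "y \<in> Sol \<alpha> \<beta>" unfolding Sol_def \<alpha>_def \<beta>_def
        by (simp add: ac_simps)
      have in3: "z \<in> Sol \<alpha> \<beta>" unfolding Sol_def \<alpha>_def \<beta>_def
        using swap[OF kz] by (simp add: ac_simps)
      have in4: "x + y + z \<in> Sol \<alpha> \<beta>" unfolding Sol_def \<alpha>_def \<beta>_def
        using swap[OF kz] by (simp add: ac_simps)
      have in5: "t \<in> Sol \<alpha> \<beta>" unfolding Sol_def \<alpha>_def \<beta>_def
        using swap[OF kt] by (simp add: ac_simps)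
      have in6: "x + y + t \<in> Sol \<alpha> \<beta>" unfolding Sol_def \<alpha>_def \<beta>_def
        using swap[OF kt] by (simp add: ac_simps)
      have sub: "{x, y, z, x+y+z, t, x+y+t} \<subseteq> Sol \<alpha> \<beta>" using in1 in2 in3 in4 in5 in6 by blast
      have d: "x \<noteq> y" "x \<noteq> z" "x \<noteq> t" "y \<noteq> z" "y \<noteq> t" "z \<noteq> t"
        using nz by (auto intro!: neqI)
      have d2: "x \<noteq> x+y+z" "y \<noteq> x+y+z" "z \<noteq> x+y+z" "t \<noteq> x+y+z"
        "x \<noteq> x+y+t" "y \<noteq> x+y+t" "z \<noteq> x+y+t" "t \<noteq> x+y+t" "x+y+z \<noteq> x+y+t"
      proof -
        have e: "x + (x+y+z) = y + z" "y + (x+y+z) = x + z" "z + (x+y+z) = x+y" "t + (x+y+z) = x+y+z+t"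
          "x + (x+y+t) = y+t" "y+(x+y+t) = x+t" "z + (x+y+t) = x+y+z+t" "t + (x+y+t) = x+y"
          "(x+y+z) + (x+y+t) = z+t" by (simp_all add: ac_simps)
        show "x \<noteq> x+y+z" "y \<noteq> x+y+z" "z \<noteq> x+y+z" "t \<noteq> x+y+z"
        "x \<noteq> x+y+t" "y \<noteq> x+y+t" "z \<noteq> x+y+t" "t \<noteq> x+y+t" "x+y+z \<noteq> x+y+t"
          by (rule neqI, simp only: e nz not_False_eq_True)+
      qed
      have "card {x, y, z, x+y+z, t, x+y+t} = 6" using d d2 d[THEN not_sym] d2[THEN not_sym] by simp
      moreover have "card {x, y, z, x+y+z, t, x+y+t} \<le> card (Sol \<alpha> \<beta>)"
        by (rule card_mono[OF _ sub]) simp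
      moreover have "card (Sol \<alpha> \<beta>) \<le> 4" using H nz(1) unfolding \<alpha>_def by blast
      ultimately show False by simp
    qed
  next
    assume H: "\<forall>x y z t. E x y z = 0 \<and> E x y t = 0 \<longrightarrow>
       (x + y) * (x + z) * (x + t) * (y + z) * (y + t) * (z + t) * (x + y + z + t) = 0"
    show "\<forall>\<alpha> \<beta>. \<alpha> \<noteq> 0 \<longrightarrow> card (Sol \<alpha> \<beta>) \<le> 4"
    proof (intro allI impI, rule ccontr)
      fix \<alpha> \<beta> :: 'a
      assume a0: "\<alpha> \<noteq> 0" and "\<not> card (Sol \<alpha> \<beta>) \<le> 4"
      hence c5: "card (Sol \<alpha> \<beta>) > 4" by simp
      have cl: "u \<in> Sol \<alpha> \<beta> \<Longrightarrow> u + \<alpha> \<in> Sol \<alpha> \<beta>" for u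
        unfolding Sol_def by (simp add: ac_simps)
      obtain x where x: "x \<in> Sol \<alpha> \<beta>" "x \<notin> set []"
        using exists_outside[of "[]" "Sol \<alpha> \<beta>"] c5 by auto
      obtain z where z: "z \<in> Sol \<alpha> \<beta>" "z \<notin> set [x, x + \<alpha>]"
        using exists_outside[of "[x, x + \<alpha>]" "Sol \<alpha> \<beta>"] c5 by auto
      obtain t where t: "t \<in> Sol \<alpha> \<beta>" "t \<notin> set [x, x + \<alpha>, z, z + \<alpha>]"
        using exists_outside[of "[x, x + \<alpha>, z, z + \<alpha>]" "Sol \<alpha> \<beta>"] c5 by auto
      define y where "y = x + \<alpha>"
      have Fx: "F (x + \<alpha>) + F x = \<beta>" using x unfolding Sol_def by simp
      have Fz: "F (z + \<alpha>) + F z = \<beta>" using z unfolding Sol_def by simp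
      have Ft: "F (t + \<alpha>) + F t = \<beta>" using t unfolding Sol_def by simp
      have xy: "x + y = \<alpha>" unfolding y_def by simp
      have n1: "x + z \<noteq> 0" "y + z \<noteq> 0" "x + t \<noteq> 0" "y + t \<noteq> 0" "z + t \<noteq> 0"
        using z t unfolding y_def by (auto intro!: sumI)
      have n2: "x + y + z + t \<noteq> 0"
      proof -
        have "z + \<alpha> \<noteq> t" using t by auto
        hence "z + \<alpha> + t \<noteq> 0" by (rule sumI)
        thus ?thesis unfolding y_def by (simp add: ac_simps)
      qed
      have ez: "E x y z = 0"
      proof -
        have "F x + F y + F z + F (x+y+z) = (F (x + \<alpha>) + F x) + (F (z + \<alpha>) + F z)"
          unfolding y_def by (simp add: ac_simps)
        also have "\<dots> = 0" using Fx Fz by simp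
        finally have "(x+y)*(x+z)*(y+z) * E x y z = 0" using key[of x y z] by simp
        thus ?thesis using a0 n1 xy by simp
      qed
      have et: "E x y t = 0"
      proof -
        have "F x + F y + F t + F (x+y+t) = (F (x + \<alpha>) + F x) + (F (t + \<alpha>) + F t)"
          unfolding y_def by (simp add: ac_simps)
        also have "\<dots> = 0" using Fx Ft by simp
        finally have "(x+y)*(x+t)*(y+t) * E x y t = 0" using key[of x y t] by simp
        thus ?thesis using a0 n1 xy by simp
      qed
      have "(x + y) * (x + z) * (x + t) * (y + z) * (y + t) * (z + t) * (x + y + z + t) = 0"
        using H ez et by blast
      thus False using a0 n1 n2 xy by simp
    qed
  qed
qed

end
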